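(* Let $m\ge 1$ and consider any complete run of the labeled chip-firing process on $\mathbb{Z}$ starting with $2m$ chips at site $0$. For integers $x,y\ge 0$, let the firing move $(x,y)$ denote the $(\min(x,y)+1)$-th to last firing move performed at site $x-y$ in this run (when it exists). Let $(x,y)$ be a firing move with $0\le x,y\le m-1$. Then: (1) the firing move $(x,y)$ takes place after the firing moves $(x+1,y)$ and $(x,y+1)$, whenever these firing moves exist; (2) when the firing move $(x,y)$ occurs, there are exactly $2$ chips present at the site that is firing.
   Context: Labeled chip-firing on the infinite path graph $\mathbb{Z}$ (each integer $i$ adjacent to $i-1$ and $i+1$): $2m$ chips carrying distinct labels, labeled $-m,\dots,-1,1,\dots,m$, are placed at site $0$. A firing move consists of choosing two chips with labels $a<b$ located at a common site $i$, and moving chip $a$ to site $i-1$ and chip $b$ to site $i+1$. A complete run is a sequence of firing moves, each legal in the configuration it is applied to, ending in a configuration where all chips occupy distinct sites (so no further firing move is possible). *)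

theory Defs
  imports Main
begin

text \<open>Chips are identified with their
labels; the chips of the process started with 2m chips are the labels
-m,...,-1,1,...,m. A configuration maps each label to its current site.\<close>

definition chips :: "nat \<Rightarrow> int set" where
  "chips m = {l. - int m \<le> l \<and> l \<le> int m \<and> l \<noteq> 0}"

type_synonym config = "int \<Rightarrow> int"

definition fire :: "config \<Rightarrow> int \<times> int \<Rightarrow> config" where
  "fire c ab = (case ab of (a, b) \<Rightarrow> c(a := c a - 1, b := c b + 1))"

definition legal :: "nat \<Rightarrow> config \<Rightarrow> int \<times> int \<Rightarrow> bool" where
  "legal m c ab = (case ab of (a, b) \<Rightarrow>
      a \<in> chips m \<and> b \<in> chips m \<and> a < b \<and> c a = c b)"

definition init_conf :: config where
  "init_conf = (\<lambda>_. 0)"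

definition conf_at :: "(int \<times> int) list \<Rightarrow> nat \<Rightarrow> config" where
  "conf_at mv i = foldl fire init_conf (take i mv)"

definition complete_run :: "nat \<Rightarrow> (int \<times> int) list \<Rightarrow> bool" where
  "complete_run m mv =
     ((\<forall>i < length mv. legal m (conf_at mv i) (mv ! i)) \<and>
      inj_on (conf_at mv (length mv)) (chips m))"

definition move_site :: "(int \<times> int) list \<Rightarrow> nat \<Rightarrow> int" where
  "move_site mv i = conf_at mv i (fst (mv ! i))"

definition fire_indices :: "(int \<times> int) list \<Rightarrow> int \<Rightarrow> nat list" where
  "fire_indices mv s = filter (\<lambda>i. move_site mv i = s) [0..<length mv]"

definition fmove :: "(int \<times> int) list \<Rightarrow> nat \<Rightarrow> nat \<Rightarrow> nat option" where
  "fmove mv x y =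
     (let xs = fire_indices mv (int x - int y); k = min x y in
      if k < length xs then Some (xs ! (length xs - 1 - k)) else None)"

definition chips_at :: "nat \<Rightarrow> config \<Rightarrow> int \<Rightarrow> nat" where
  "chips_at m c s = card {l \<in> chips m. c l = s}"

end

theory Submission
  imports Defs
begin

definition Fc :: "(nat \<Rightarrow> int) \<Rightarrow> nat \<Rightarrow> int \<Rightarrow> int" where
  "Fc \<sigma> t s = int (length (filter (\<lambda>i. \<sigma> i = s) [0..<t]))"
definition c0 :: "nat \<Rightarrow> int \<Rightarrow> int" where
  "c0 m s = (if s = 0 then 2 * int m else 0)"
definition chip :: "nat \<Rightarrow> (nat \<Rightarrow> int) \<Rightarrow> nat \<Rightarrow> int \<Rightarrow> int" where
  "chip m \<sigma> t s = c0 m s + Fc \<sigma> t (s - 1) + Fc \<sigma> t (s + 1) - 2 * Fc \<sigma> t s"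
definition hh :: "nat \<Rightarrow> int \<Rightarrow> int" where
  "hh m s = (if s \<noteq> 0 \<and> \<bar>s\<bar> \<le> int m then 1 else 0)"
definition Tn :: "int \<Rightarrow> int" where
  "Tn k = k * (k + 1) div 2"
definition w :: "nat \<Rightarrow> int \<Rightarrow> int" where
  "w m s = (if \<bar>s\<bar> \<le> int m then Tn (int m - \<bar>s\<bar>) else 0)"
definition good :: "nat \<Rightarrow> (nat \<Rightarrow> int) \<Rightarrow> nat \<Rightarrow> bool" where
  "good m \<sigma> n = ((\<forall>t<n. chip m \<sigma> t (\<sigma> t) \<ge> 2) \<and> (\<forall>s. chip m \<sigma> n s \<le> 1))"
definition rfl :: "(nat \<Rightarrow> int) \<Rightarrow> nat \<Rightarrow> int" where
  "rfl \<sigma> = (\<lambda>i. - \<sigma> i)"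
definition Rv :: "nat \<Rightarrow> (nat \<Rightarrow> int) \<Rightarrow> nat \<Rightarrow> int \<Rightarrow> int" where
  "Rv m \<sigma> t s = w m s - Fc \<sigma> t s"

lemma Fc_0[simp]: "Fc \<sigma> 0 s = 0" by (simp add: Fc_def)
lemma Fc_Suc: "Fc \<sigma> (Suc t) s = Fc \<sigma> t s + (if \<sigma> t = s then 1 else 0)"
  by (simp add: Fc_def)
lemma Fc_nonneg: "Fc \<sigma> t s \<ge> 0" by (simp add: Fc_def)
lemma Fc_mono: "t1 \<le> t2 \<Longrightarrow> Fc \<sigma> t1 s \<le> Fc \<sigma> t2 s"
proof (induction t2)
  case 0 then show ?case by simp
next
  case (Suc t2) then show ?case by (cases "t1 = Suc t2") (auto simp: Fc_Suc)
qed
lemma rfl_rfl[simp]: "rfl (rfl \<sigma>) = \<sigma>" by (simp add: rfl_def)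
lemma Fc_rfl: "Fc (rfl \<sigma>) t s = Fc \<sigma> t (- s)"
  unfolding Fc_def rfl_def by (metis minus_equation_iff)
lemma chip_rfl: "chip m (rfl \<sigma>) t s = chip m \<sigma> t (- s)"
proof -
  have "- (s - 1) = - s + 1" "- (s + 1) = - s - 1" by simp_all
  then show ?thesis unfolding chip_def Fc_rfl c0_def by (simp only:) simp
qed
lemma w_sym: "w m (- s) = w m s" by (simp add: w_def)
lemma hh_sym: "hh m (- s) = hh m s" by (simp add: hh_def)
lemma Rv_rfl: "Rv m (rfl \<sigma>) t s = Rv m \<sigma> t (- s)"
  by (simp add: Rv_def Fc_rfl w_sym)
lemma good_rfl: "good m \<sigma> n \<Longrightarrow> good m (rfl \<sigma>) n"
  by (simp add: good_def chip_rfl) (simp add: rfl_def)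

lemma Tn_succ: "Tn (k + 1) = Tn k + k + 1"
proof -
  have "(k + 1) * (k + 1 + 1) = k * (k + 1) + 2 * (k + 1)" by (simp add: algebra_simps)
  then show ?thesis unfolding Tn_def by simp
qed
lemma Tn_0[simp]: "Tn 0 = 0" by (simp add: Tn_def)
lemma Tn_pos: "k \<ge> 0 \<Longrightarrow> Tn k \<ge> k"
proof (induction k rule: int_ge_induct)
  case base then show ?case by simp
next
  case (step i) then show ?case using Tn_succ[of i] by simp
qed

lemma w_pos_right: "0 \<le> s \<Longrightarrow> s \<le> int m \<Longrightarrow> w m s = Tn (int m - s)"
  by (simp add: w_def)

lemma dw_right: assumes "s \<ge> 1" shows "c0 m s + w m (s - 1) + w m (s + 1) - 2 * w m s = hh m s"
proof -
  consider "s \<le> int m - 1" | "s = int m" | "s = int m + 1" | "s \<ge> int m + 2" using assms by linarith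
  then show ?thesis
  proof cases
    case 1
    then have "w m (s - 1) = Tn (int m - s + 1)" "w m (s + 1) = Tn (int m - s - 1)" "w m s = Tn (int m - s)"
      using assms by (simp_all add: w_def algebra_simps)
    moreover have "Tn (int m - s + 1) = Tn (int m - s) + (int m - s) + 1" using Tn_succ by simp
    moreover have "Tn (int m - s) = Tn (int m - s - 1) + (int m - s - 1) + 1" using Tn_succ[of "int m - s - 1"] by simp
    ultimately show ?thesis using 1 assms by (simp add: c0_def hh_def)
  next
    case 2 then show ?thesis using assms Tn_succ[of 0] by (simp add: w_def c0_def hh_def)
  next
    case 3 then show ?thesis using assms by (simp add: w_def c0_def hh_def)
  next
    case 4 then show ?thesis using assms by (simp add: w_def c0_def hh_def)
  qed
qed

lemma dw: "c0 m s + w m (s - 1) + w m (s + 1) - 2 * w m s = hh m s"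
proof -
  consider "s \<ge> 1" | "s \<le> -1" | "s = 0" by linarith
  then show ?thesis
  proof cases
    case 1 then show ?thesis by (rule dw_right)
  next
    case 2
    have "c0 m (-s) + w m (-s - 1) + w m (-s + 1) - 2 * w m (-s) = hh m (-s)" using 2 dw_right[of "-s" m] by simp
    moreover have "w m (-s - 1) = w m (s + 1)" "w m (-s + 1) = w m (s - 1)"
      using w_sym[of m "s+1"] w_sym[of m "s - 1"] by simp_all
    ultimately show ?thesis by (simp add: w_sym hh_sym c0_def)
  next
    case 3
    show ?thesis
    proof (cases "m = 0")
      case True then show ?thesis using 3 by (simp add: w_def c0_def hh_def)
    next
      case False
      then have "w m (-1) = Tn (int m - 1)" "w m 1 = Tn (int m - 1)" "w m 0 = Tn (int m)"
        by (simp_all add: w_def)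
      moreover have "Tn (int m) = Tn (int m - 1) + int m" using Tn_succ[of "int m - 1"] by simp
      ultimately show ?thesis using 3 by (simp add: c0_def hh_def)
    qed
  qed
qed

lemma chip_Rv: "chip m \<sigma> t s = hh m s + 2 * Rv m \<sigma> t s - Rv m \<sigma> t (s - 1) - Rv m \<sigma> t (s + 1)"
  using dw[of m s] by (simp add: chip_def Rv_def)


lemma chip_Suc: "chip m \<sigma> (Suc t) s = chip m \<sigma> t s + (if \<sigma> t = s - 1 then 1 else 0)
   + (if \<sigma> t = s + 1 then 1 else 0) - (if \<sigma> t = s then 2 else 0)"
  by (auto simp: chip_def Fc_Suc)

lemma chip_nonneg:
  assumes "\<forall>t<n. chip m \<sigma> t (\<sigma> t) \<ge> 2" "t \<le> n"
  shows "chip m \<sigma> t s \<ge> 0"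
  using assms(2)
proof (induction t arbitrary: s)
  case 0 then show ?case by (simp add: chip_def c0_def)
next
  case (Suc t)
  have "chip m \<sigma> t s \<ge> 0" using Suc by simp
  moreover have "chip m \<sigma> t (\<sigma> t) \<ge> 2" using assms(1) Suc by simp
  ultimately show ?case by (auto simp: chip_Suc)
qed

lemma least_action:
  assumes "good m \<sigma> n" "t \<le> n"
  shows "Fc \<sigma> t s \<le> w m s"
  using assms(2)
proof (induction t arbitrary: s)
  case 0
  have "0 \<le> w m s"
  proof (cases "\<bar>s\<bar> \<le> int m")
    case True then show ?thesis using Tn_pos[of "int m - \<bar>s\<bar>"] by (simp add: w_def)
  qed (simp add: w_def)
  then show ?case by simp
next
  case (Suc t)
  have IH: "\<And>s. Fc \<sigma> t s \<le> w m s" using Suc by simp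
  show ?case
  proof (cases "\<sigma> t = s")
    case False then show ?thesis using IH by (simp add: Fc_Suc)
  next
    case True
    have "chip m \<sigma> t s \<ge> 2" using assms(1) Suc True by (auto simp: good_def)
    moreover have "Fc \<sigma> t s < w m s"
    proof (rule ccontr)
      assume "\<not> ?thesis"
      then have "Rv m \<sigma> t s = 0" using IH[of s] by (simp add: Rv_def)
      moreover have "Rv m \<sigma> t (s - 1) \<ge> 0" "Rv m \<sigma> t (s + 1) \<ge> 0" using IH by (simp_all add: Rv_def)
      ultimately have "chip m \<sigma> t s \<le> hh m s" by (simp add: chip_Rv)
      moreover have "hh m s \<le> 1" by (simp add: hh_def)
      ultimately show False using \<open>chip m \<sigma> t s \<ge> 2\<close> by simp
    qed
    then show ?thesis by (simp add: Fc_Suc)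
  qed
qed

lemma conv_right1:
  fixes d :: "int \<Rightarrow> int" and M :: int
  assumes "\<forall>s. 1 \<le> s \<and> s \<le> M \<longrightarrow> d (s - 1) + d (s + 1) - 2 * d s \<ge> 0" "d M = 0" "d (M + 1) = 0"
    and "0 \<le> j" "j \<le> M"
  shows "d (j + 1) \<le> d j"
proof -
  have "0 \<le> j \<longrightarrow> d (j + 1) \<le> d j" using assms(5)
  proof (induction j rule: int_le_induct)
    case base then show ?case using assms by simp
  next
    case (step i)
    show ?case
    proof
      assume "0 \<le> i - 1"
      then have "d (i - 1) + d (i + 1) - 2 * d i \<ge> 0" using assms(1) step by simp
      then show "d (i - 1 + 1) \<le> d (i - 1)" using step \<open>0 \<le> i - 1\<close> by simp
    qed
  qed
  then show ?thesis using assms by simp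
qed

lemma conv_right2:
  fixes d :: "int \<Rightarrow> int" and M :: int
  assumes "\<forall>s. 1 \<le> s \<and> s \<le> M \<longrightarrow> d (s - 1) + d (s + 1) - 2 * d s \<ge> 0" "d M = 0" "d (M + 1) = 0"
    and "d 1 \<ge> d 0" "0 \<le> M"
  shows "\<forall>j. 0 \<le> j \<and> j \<le> M \<longrightarrow> d j = 0"
proof -
  have up: "j \<le> M \<longrightarrow> d (j + 1) \<ge> d j" if "0 \<le> j" for j
    using that
  proof (induction j rule: int_ge_induct)
    case base then show ?case using assms by simp
  next
    case (step i)
    show ?case
    proof
      assume "i + 1 \<le> M"
      then have "d (i + 1 - 1) + d (i + 1 + 1) - 2 * d (i + 1) \<ge> 0" using assms(1)[rule_format, of "i + 1"] step.hyps
        by linarith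
      then show "d (i + 1 + 1) \<ge> d (i + 1)" using step \<open>i + 1 \<le> M\<close> by simp
    qed
  qed
  have eq: "d (j + 1) = d j" if "0 \<le> j" "j \<le> M" for j
    using up[OF that(1)] that conv_right1[OF assms(1-3) that] by simp
  have "0 \<le> j \<longrightarrow> d j = 0" if "j \<le> M" for j
    using that
  proof (induction j rule: int_le_induct)
    case base then show ?case using assms by simp
  next
    case (step i)
    then show ?case using eq[of "i - 1"] by auto
  qed
  then show ?thesis by auto
qed

lemma odometer:
  assumes "good m \<sigma> n"
  shows "Fc \<sigma> n s = w m s"
proof -
  define d where "d s = Rv m \<sigma> n s" for s
  have dnn: "d s \<ge> 0" for s using least_action[OF assms, of n s] by (simp add: d_def Rv_def)
  have dout: "d s = 0" if "\<bar>s\<bar> \<ge> int m" for s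
  proof -
    have "w m s = 0" using that by (cases "\<bar>s\<bar> = int m") (auto simp: w_def)
    then show ?thesis using dnn[of s] Fc_nonneg[of \<sigma> n s] by (simp add: d_def Rv_def)
  qed
  have lap: "d (s - 1) + d (s + 1) - 2 * d s \<ge> hh m s - 1" for s
  proof -
    have "chip m \<sigma> n s \<le> 1" using assms by (simp add: good_def)
    then show ?thesis using chip_Rv[of m \<sigma> n s] unfolding d_def by linarith
  qed
  define d' where "d' s = d (- s)" for s
  have c1: "\<forall>s. 1 \<le> s \<and> s \<le> int m \<longrightarrow> d (s - 1) + d (s + 1) - 2 * d s \<ge> 0"
  proof (intro allI impI)
    fix s :: int assume "1 \<le> s \<and> s \<le> int m"
    then have "hh m s = 1" by (simp add: hh_def)
    then show "d (s - 1) + d (s + 1) - 2 * d s \<ge> 0" using lap[of s] by simp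
  qed
  have c2: "\<forall>s. 1 \<le> s \<and> s \<le> int m \<longrightarrow> d' (s - 1) + d' (s + 1) - 2 * d' s \<ge> 0"
  proof (intro allI impI)
    fix s :: int assume "1 \<le> s \<and> s \<le> int m"
    then have "hh m (- s) = 1" by (simp add: hh_def)
    moreover have "d (- s - 1) = d (- 1 - s)" by (rule arg_cong[where f=d]) simp
    ultimately show "d' (s - 1) + d' (s + 1) - 2 * d' s \<ge> 0" using lap[of "- s"] by (simp add: d'_def)
  qed
  have b1: "d (int m) = 0" "d (int m + 1) = 0" "d' (int m) = 0" "d' (int m + 1) = 0"
    using dout by (simp_all add: d'_def)
  have r1: "d 1 \<le> d 0" using conv_right1[OF c1 b1(1,2), of 0] by simp
  have l1: "d' 1 \<le> d' 0" using conv_right1[OF c2 b1(3,4), of 0] by simp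
  have z: "d (-1) + d 1 - 2 * d 0 \<ge> -1" using lap[of 0] by (simp add: hh_def)
  have allz: "d s = 0" if "\<bar>s\<bar> \<le> int m" for s
  proof -
    have m0: "0 \<le> int m" by simp
    have RL: "(\<forall>j. 0 \<le> j \<and> j \<le> int m \<longrightarrow> d j = 0) \<and> (\<forall>j. 0 \<le> j \<and> j \<le> int m \<longrightarrow> d' j = 0)"
    proof (cases "d 1 \<ge> d 0")
      case True
      have R: "\<forall>j. 0 \<le> j \<and> j \<le> int m \<longrightarrow> d j = 0" by (rule conv_right2[OF c1 b1(1,2) True m0])
      have d0: "d 0 = 0" using R m0 by blast
      have "d' 1 \<ge> d' 0" unfolding d'_def using dnn[of "-1"] d0 by simp
      then have L: "\<forall>j. 0 \<le> j \<and> j \<le> int m \<longrightarrow> d' j = 0" by (rule conv_right2[OF c2 b1(3,4) _ m0])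
      show ?thesis using R L by blast
    next
      case False
      have "d' 1 \<ge> d' 0" unfolding d'_def minus_zero using z r1 False by linarith
      then have L: "\<forall>j. 0 \<le> j \<and> j \<le> int m \<longrightarrow> d' j = 0" by (rule conv_right2[OF c2 b1(3,4) _ m0])
      have "d' 0 = 0" using L m0 by blast
      then have "d 0 = 0" unfolding d'_def by simp
      then show ?thesis using False dnn[of 1] by linarith
    qed
    show ?thesis
    proof (cases "s \<ge> 0")
      case True then show ?thesis using RL that by auto
    next
      case False
      then have "d' (- s) = 0" using RL that by auto
      then show ?thesis unfolding d'_def by simp
    qed
  qed
  have "d s = 0"
    using allz dout by (cases "\<bar>s\<bar> \<le> int m") auto
  then show ?thesis by (simp add: d_def Rv_def)
qed

lemma pres_core:
  fixes R :: "int \<Rightarrow> int" and M p s :: int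
  assumes s: "1 \<le> s" "s \<le> M - 1"
    and IA: "\<forall>s. 1 \<le> s \<and> s \<le> M - 1 \<longrightarrow> R s \<le> M - s \<longrightarrow> R (s - 1) \<ge> R s"
    and IB: "\<forall>s. 1 \<le> s \<and> s \<le> M - 1 \<longrightarrow> R s \<le> M - s - 1 \<longrightarrow> R (s - 1) \<le> R s + 1"
    and LB: "R (-1) \<le> M - 2 \<longrightarrow> R 0 \<le> R (-1) + 1"
    and nnR: "\<forall>s. 1 \<le> s \<and> s \<le> M \<longrightarrow> 1 + 2 * R s - R (s - 1) - R (s + 1) \<ge> 0"
    and nn0: "2 * R 0 - R (-1) - R 1 \<ge> 0"
    and legR: "1 \<le> p \<longrightarrow> p \<le> M \<longrightarrow> 1 + 2 * R p - R (p - 1) - R (p + 1) \<ge> 2"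
    and leg0: "p = 0 \<longrightarrow> 2 * R 0 - R (-1) - R 1 \<ge> 2"
    and Rm: "R M = 0"
  shows "(R s - (if p = s then 1 else 0) \<le> M - s \<longrightarrow>
            R (s - 1) - (if p = s - 1 then 1 else 0) \<ge> R s - (if p = s then 1 else 0)) \<and>
         (R s - (if p = s then 1 else 0) \<le> M - s - 1 \<longrightarrow>
            R (s - 1) - (if p = s - 1 then 1 else 0) \<le> R s - (if p = s then 1 else 0) + 1)"
proof -
  have IAs: "R s \<le> M - s \<longrightarrow> R (s - 1) \<ge> R s" using IA s by blast
  have IBs: "R s \<le> M - s - 1 \<longrightarrow> R (s - 1) \<le> R s + 1" using IB s by blast
  consider "p = s" | "p = s - 1" | "p \<noteq> s \<and> p \<noteq> s - 1" by blast
  then show ?thesis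
  proof cases
    case 3 then show ?thesis using IAs IBs by simp
  next
    case 1
    have A': "R (s - 1) \<ge> R s - 1" if "R s - 1 \<le> M - s"
    proof (cases "R s \<le> M - s")
      case True then show ?thesis using IAs by simp
    next
      case False
      then have b: "R s = M - s + 1" using that by simp
      show ?thesis
      proof (rule ccontr)
        assume a: "\<not> ?thesis"
        show False
        proof (cases "s \<ge> 2")
          case True
          have "R (s - 1) \<le> M - (s - 1) \<longrightarrow> R (s - 1 - 1) \<ge> R (s - 1)" using IA[rule_format, of "s - 1"] s True by simp
          moreover have "1 + 2 * R (s - 1) - R (s - 1 - 1) - R (s - 1 + 1) \<ge> 0" using nnR[rule_format, of "s - 1"] s True by simp
          ultimately show False using a b by simp
        next
          case False
          then have "s = 1" using s by simp
          then show False using nn0 LB a b by auto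
        qed
      qed
    qed
    have B': "R (s - 1) \<le> R s" if "R s - 1 \<le> M - s - 1"
    proof -
      have ge: "R (s + 1) \<ge> R s - 1"
      proof (cases "s + 1 \<le> M - 1")
        case True
        have "R (s + 1) \<le> M - (s + 1) - 1 \<longrightarrow> R (s + 1 - 1) \<le> R (s + 1) + 1" using IB[rule_format, of "s + 1"] s True by simp
        then show ?thesis using that by auto
      next
        case False
        then have "s + 1 = M" using s by simp
        then show ?thesis using Rm that by auto
      qed
      have "1 + 2 * R s - R (s - 1) - R (s + 1) \<ge> 2" using legR 1 s by simp
      then show ?thesis using ge by simp
    qed
    show ?thesis using 1 A' B' by auto
  next
    case 2
    have A': "R (s - 1) - 1 \<ge> R s" if "R s \<le> M - s"
    proof (rule ccontr)
      assume a: "\<not> ?thesis"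
      then have e: "R (s - 1) = R s" using IAs that by simp
      show False
      proof (cases "s \<ge> 2")
        case True
        have "R (s - 1) \<le> M - (s - 1) \<longrightarrow> R (s - 1 - 1) \<ge> R (s - 1)" using IA[rule_format, of "s - 1"] s True by simp
        moreover have "1 + 2 * R (s - 1) - R (s - 1 - 1) - R (s - 1 + 1) \<ge> 2" using legR 2 s True by simp
        ultimately show False using e that by simp
      next
        case False
        then have "s = 1" using s by simp
        then show False using leg0 2 LB e that by auto
      qed
    qed
    show ?thesis using 2 A' IBs by auto
  qed
qed

definition InvR :: "nat \<Rightarrow> (nat \<Rightarrow> int) \<Rightarrow> nat \<Rightarrow> bool" where
  "InvR m \<sigma> t = (\<forall>s. 1 \<le> s \<and> s \<le> int m - 1 \<longrightarrow>
     (Rv m \<sigma> t s \<le> int m - s \<longrightarrow> Rv m \<sigma> t (s - 1) \<ge> Rv m \<sigma> t s) \<and>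
     (Rv m \<sigma> t s \<le> int m - s - 1 \<longrightarrow> Rv m \<sigma> t (s - 1) \<le> Rv m \<sigma> t s + 1))"

lemma Rv_Suc: "Rv m \<sigma> (Suc t) s = Rv m \<sigma> t s - (if \<sigma> t = s then 1 else 0)"
  by (simp add: Rv_def Fc_Suc)

lemma Rv_nonneg: "good m \<sigma> n \<Longrightarrow> t \<le> n \<Longrightarrow> Rv m \<sigma> t s \<ge> 0"
  using least_action[of m \<sigma> n t s] by (simp add: Rv_def)

lemma Rv_m: "good m \<sigma> n \<Longrightarrow> t \<le> n \<Longrightarrow> Rv m \<sigma> t (int m) = 0"
  using Rv_nonneg[of m \<sigma> n t "int m"] Fc_nonneg[of \<sigma> t "int m"] by (simp add: Rv_def w_def)

lemma chip_nonneg_good: "good m \<sigma> n \<Longrightarrow> t \<le> n \<Longrightarrow> chip m \<sigma> t s \<ge> 0"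
  using chip_nonneg[of n m \<sigma> t s] by (simp add: good_def)

lemma pres:
  assumes g: "good m \<sigma> n" and t: "t < n" and I1: "InvR m \<sigma> t" and I2: "InvR m (rfl \<sigma>) t"
  shows "InvR m \<sigma> (Suc t)"
  unfolding InvR_def
proof (intro allI impI)
  fix s :: int assume s: "1 \<le> s \<and> s \<le> int m - 1"
  define R where "R = Rv m \<sigma> t"
  have IA: "\<forall>s. 1 \<le> s \<and> s \<le> int m - 1 \<longrightarrow> R s \<le> int m - s \<longrightarrow> R (s - 1) \<ge> R s"
    using I1 by (simp add: InvR_def R_def)
  have IB: "\<forall>s. 1 \<le> s \<and> s \<le> int m - 1 \<longrightarrow> R s \<le> int m - s - 1 \<longrightarrow> R (s - 1) \<le> R s + 1"
    using I1 by (simp add: InvR_def R_def)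
  have LB: "R (-1) \<le> int m - 2 \<longrightarrow> R 0 \<le> R (-1) + 1"
  proof -
    have "Rv m (rfl \<sigma>) t 1 \<le> int m - 1 - 1 \<longrightarrow> Rv m (rfl \<sigma>) t (1 - 1) \<le> Rv m (rfl \<sigma>) t 1 + 1"
      using I2 s unfolding InvR_def by (metis order.trans order_refl)
    then show ?thesis by (simp add: Rv_rfl R_def)
  qed
  have tn: "t \<le> n" using t by simp
  have nn: "hh m q + 2 * R q - R (q - 1) - R (q + 1) \<ge> 0" for q
    using chip_nonneg_good[OF g tn, of q] chip_Rv[of m \<sigma> t q] by (simp add: R_def)
  have nnR: "\<forall>s. 1 \<le> s \<and> s \<le> int m \<longrightarrow> 1 + 2 * R s - R (s - 1) - R (s + 1) \<ge> 0"
  proof (intro allI impI)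
    fix q :: int assume "1 \<le> q \<and> q \<le> int m"
    then have "hh m q = 1" by (simp add: hh_def)
    then show "1 + 2 * R q - R (q - 1) - R (q + 1) \<ge> 0" using nn[of q] by simp
  qed
  have nn0: "2 * R 0 - R (-1) - R 1 \<ge> 0" using nn[of 0] by (simp add: hh_def)
  have lg: "hh m (\<sigma> t) + 2 * R (\<sigma> t) - R (\<sigma> t - 1) - R (\<sigma> t + 1) \<ge> 2"
  proof -
    have "chip m \<sigma> t (\<sigma> t) \<ge> 2" using g t by (simp add: good_def)
    then show ?thesis using chip_Rv[of m \<sigma> t "\<sigma> t"] by (simp add: R_def)
  qed
  have legR: "1 \<le> \<sigma> t \<longrightarrow> \<sigma> t \<le> int m \<longrightarrow> 1 + 2 * R (\<sigma> t) - R (\<sigma> t - 1) - R (\<sigma> t + 1) \<ge> 2"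
  proof (intro impI)
    assume "1 \<le> \<sigma> t" "\<sigma> t \<le> int m"
    then have "hh m (\<sigma> t) = 1" by (simp add: hh_def)
    then show "1 + 2 * R (\<sigma> t) - R (\<sigma> t - 1) - R (\<sigma> t + 1) \<ge> 2" using lg by linarith
  qed
  have leg0: "\<sigma> t = 0 \<longrightarrow> 2 * R 0 - R (-1) - R 1 \<ge> 2"
  proof
    assume "\<sigma> t = 0"
    then show "2 * R 0 - R (-1) - R 1 \<ge> 2" using lg by (simp add: hh_def)
  qed
  have Rm: "R (int m) = 0" using Rv_m[OF g tn] by (simp add: R_def)
  note core = pres_core[OF _ _ IA IB LB nnR nn0 legR leg0 Rm, of s]
  then show "(Rv m \<sigma> (Suc t) s \<le> int m - s \<longrightarrow> Rv m \<sigma> (Suc t) (s - 1) \<ge> Rv m \<sigma> (Suc t) s) \<and>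
     (Rv m \<sigma> (Suc t) s \<le> int m - s - 1 \<longrightarrow> Rv m \<sigma> (Suc t) (s - 1) \<le> Rv m \<sigma> (Suc t) s + 1)"
    using s by (simp add: Rv_Suc R_def)
qed

lemma inv_base: "InvR m \<sigma> 0"
  unfolding InvR_def
proof (intro allI impI)
  fix s :: int assume s: "1 \<le> s \<and> s \<le> int m - 1"
  have e: "int m - (s - 1) = int m - s + 1" by simp
  have a: "Rv m \<sigma> 0 s = Tn (int m - s)" using s by (simp add: Rv_def w_def)
  have "Rv m \<sigma> 0 (s - 1) = Tn (int m - (s - 1))" using s by (simp add: Rv_def w_def)
  also have "int m - (s - 1) = int m - s + 1" by simp
  finally have b: "Rv m \<sigma> 0 (s - 1) = Tn (int m - s + 1)" .
  have c: "Tn (int m - s + 1) = Tn (int m - s) + (int m - s) + 1" by (rule Tn_succ)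
  have d: "Tn (int m - s) \<ge> int m - s" using s Tn_pos by simp
  show "(Rv m \<sigma> 0 s \<le> int m - s \<longrightarrow> Rv m \<sigma> 0 (s - 1) \<ge> Rv m \<sigma> 0 s) \<and>
     (Rv m \<sigma> 0 s \<le> int m - s - 1 \<longrightarrow> Rv m \<sigma> 0 (s - 1) \<le> Rv m \<sigma> 0 s + 1)"
    unfolding a b c using d s by linarith
qed

lemma inv_all:
  assumes g: "good m \<sigma> n"
  shows "t \<le> n \<Longrightarrow> InvR m \<sigma> t \<and> InvR m (rfl \<sigma>) t"
proof (induction t)
  case 0 then show ?case by (simp add: inv_base)
next
  case (Suc t)
  then have t: "t < n" by simp
  have IH: "InvR m \<sigma> t" "InvR m (rfl \<sigma>) t" using Suc by simp_all
  have "InvR m \<sigma> (Suc t)" by (rule pres[OF g t IH])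
  moreover have "InvR m (rfl \<sigma>) (Suc t)" using pres[OF good_rfl[OF g] t IH(2)] IH(1) by simp
  ultimately show ?case by simp
qed


lemma InvR_at:
  assumes "InvR m \<sigma> t" "1 \<le> s" "s \<le> int m - 1"
  shows "Rv m \<sigma> t s \<le> int m - s \<longrightarrow> Rv m \<sigma> t (s - 1) \<ge> Rv m \<sigma> t s"
    and "Rv m \<sigma> t s \<le> int m - s - 1 \<longrightarrow> Rv m \<sigma> t (s - 1) \<le> Rv m \<sigma> t s + 1"
  using assms unfolding InvR_def by blast+

lemma claim_right:
  assumes g: "good m \<sigma> n" and i: "i < n" and si: "\<sigma> i = s" and s: "1 \<le> s" "s \<le> int m - 1"
    and r: "Rv m \<sigma> i s = r + 1" "0 \<le> r" "r \<le> int m - s - 1"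
  shows "Rv m \<sigma> i (s - 1) = r + 1 \<and> Rv m \<sigma> i (s + 1) = r \<and> chip m \<sigma> i s = 2"
proof -
  have I: "InvR m \<sigma> i" using inv_all[OF g] i by simp
  have I': "InvR m \<sigma> (Suc i)" using inv_all[OF g, of "Suc i"] i by simp
  have a1: "Rv m \<sigma> i (s - 1) \<ge> r + 1" using InvR_at(1)[OF I s] r by simp
  have post: "Rv m \<sigma> (Suc i) s = r" "Rv m \<sigma> (Suc i) (s - 1) = Rv m \<sigma> i (s - 1)"
    using r si by (simp_all add: Rv_Suc)
  have a2: "Rv m \<sigma> i (s - 1) \<le> r + 1" using InvR_at(2)[OF I' s] post r by simp
  have b1: "Rv m \<sigma> i (s + 1) \<ge> r"
  proof (cases "s + 1 \<le> int m - 1")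
    case True
    have "Rv m \<sigma> i (s + 1) \<le> int m - (s + 1) - 1 \<longrightarrow> Rv m \<sigma> i (s + 1 - 1) \<le> Rv m \<sigma> i (s + 1) + 1"
      using InvR_at(2)[OF I _ True] s by simp
    then show ?thesis using r by auto
  next
    case False
    then have "s + 1 = int m" using s by simp
    then show ?thesis using Rv_m[OF g, of i] i r by simp
  qed
  have "chip m \<sigma> i s \<ge> 2" using g i si by (auto simp: good_def)
  moreover have "hh m s = 1" using s by (simp add: hh_def)
  ultimately have "1 + 2 * Rv m \<sigma> i s - Rv m \<sigma> i (s - 1) - Rv m \<sigma> i (s + 1) \<ge> 2"
    using chip_Rv[of m \<sigma> i s] by simp
  then show ?thesis using a1 a2 b1 r chip_Rv[of m \<sigma> i s] \<open>hh m s = 1\<close> by simp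
qed

lemma claim_zero:
  assumes g: "good m \<sigma> n" and i: "i < n" and si: "\<sigma> i = 0"
    and r: "Rv m \<sigma> i 0 = r + 1" "0 \<le> r" "r \<le> int m - 1"
  shows "Rv m \<sigma> i (-1) = r \<and> Rv m \<sigma> i 1 = r \<and> chip m \<sigma> i 0 = 2"
proof -
  have ge: "Rv m \<tau> i 1 \<ge> r" if g': "good m \<tau> n" and r': "Rv m \<tau> i 0 = r + 1" for \<tau>
  proof (cases "Rv m \<tau> i 1 \<le> int m - 2")
    case True
    have "Rv m \<tau> i 1 \<ge> 0" using Rv_nonneg[OF g', of i] i by simp
    then have m2: "1 \<le> int m - 1" using True by simp
    have I: "InvR m \<tau> i" using inv_all[OF g'] i by simp
    have "Rv m \<tau> i (1 - 1) \<le> Rv m \<tau> i 1 + 1" using InvR_at(2)[OF I _ m2] True by simp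
    then show ?thesis using r' by simp
  next
    case False then show ?thesis using r by simp
  qed
  have g1: "Rv m \<sigma> i 1 \<ge> r" using ge[OF g r(1)] .
  have g2: "Rv m (rfl \<sigma>) i 1 \<ge> r" using ge[OF good_rfl[OF g]] r(1) by (simp add: Rv_rfl)
  have "chip m \<sigma> i 0 \<ge> 2" using g i si by (auto simp: good_def)
  then have "2 * Rv m \<sigma> i 0 - Rv m \<sigma> i (-1) - Rv m \<sigma> i 1 \<ge> 2"
    using chip_Rv[of m \<sigma> i 0] by (simp add: hh_def)
  then show ?thesis using g1 g2 r chip_Rv[of m \<sigma> i 0] by (simp add: Rv_rfl hh_def)
qed


lemma conf_at_Suc: "t < length mv \<Longrightarrow> conf_at mv (Suc t) = fire (conf_at mv t) (mv ! t)"
  by (simp add: conf_at_def take_Suc_conv_app_nth)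

lemma card_chips: "card (chips m) = 2 * m"
proof -
  have "chips m = {- int m..int m} - {0}" by (auto simp: chips_def)
  then show ?thesis by simp
qed

lemma finite_chips: "finite (chips m)"
proof -
  have "chips m \<subseteq> {- int m..int m}" by (auto simp: chips_def)
  then show ?thesis using finite_subset by blast
qed

lemma card_fire:
  fixes c :: "int \<Rightarrow> int"
  assumes A: "finite A" and ab: "a \<in> A" "b \<in> A" "a \<noteq> b" and cp: "c a = p" "c b = p"
  shows "int (card {l\<in>A. (c(a := p - 1, b := p + 1)) l = s}) = int (card {l\<in>A. c l = s})
     + (if s = p - 1 then 1 else 0) + (if s = p + 1 then 1 else 0) - (if s = p then 2 else 0)"
proof -
  define B where "B = {l \<in> A - {a, b}. c l = s}"
  have fB: "finite B" using A by (simp add: B_def)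
  have nB: "a \<notin> B" "b \<notin> B" by (auto simp: B_def)
  consider "s = p" | "s = p - 1" | "s = p + 1" | "s \<noteq> p \<and> s \<noteq> p - 1 \<and> s \<noteq> p + 1" by blast
  then show ?thesis
  proof cases
    case 1
    have "{l\<in>A. c l = s} = insert a (insert b B)" using ab cp 1 by (auto simp: B_def)
    moreover have "{l\<in>A. (c(a := p - 1, b := p + 1)) l = s} = B" using ab cp 1 by (auto simp: B_def)
    ultimately show ?thesis using fB nB ab 1 by simp
  next
    case 2
    have "{l\<in>A. c l = s} = B" using ab cp 2 by (auto simp: B_def)
    moreover have "{l\<in>A. (c(a := p - 1, b := p + 1)) l = s} = insert a B" using ab cp 2 by (auto simp: B_def)
    ultimately show ?thesis using fB nB ab 2 by simp
  next
    case 3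
    have "{l\<in>A. c l = s} = B" using ab cp 3 by (auto simp: B_def)
    moreover have "{l\<in>A. (c(a := p - 1, b := p + 1)) l = s} = insert b B" using ab cp 3 by (auto simp: B_def)
    ultimately show ?thesis using fB nB ab 3 by simp
  next
    case 4
    have "{l\<in>A. c l = s} = B" using ab cp 4 by (auto simp: B_def)
    moreover have "{l\<in>A. (c(a := p - 1, b := p + 1)) l = s} = B" using ab cp 4 by (auto simp: B_def)
    ultimately show ?thesis using 4 by simp
  qed
qed

lemma legal_unpack:
  assumes "complete_run m mv" "t < length mv"
  obtains a b where "mv ! t = (a, b)" "a \<in> chips m" "b \<in> chips m" "a < b"
    "conf_at mv t a = move_site mv t" "conf_at mv t b = move_site mv t"
proof -
  obtain a b where ab: "mv ! t = (a, b)" by (cases "mv ! t") auto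
  have "legal m (conf_at mv t) (mv ! t)" using assms by (simp add: complete_run_def)
  then show ?thesis using that ab by (simp add: legal_def move_site_def)
qed

lemma chips_link:
  assumes cr: "complete_run m mv"
  shows "t \<le> length mv \<Longrightarrow> int (chips_at m (conf_at mv t) s) = chip m (move_site mv) t s"
proof (induction t arbitrary: s)
  case 0
  have "conf_at mv 0 = (\<lambda>_. 0)" by (simp add: conf_at_def init_conf_def)
  then show ?case by (simp add: chips_at_def chip_def c0_def card_chips)
next
  case (Suc t)
  then have t: "t < length mv" by simp
  obtain a b where ab: "mv ! t = (a, b)" "a \<in> chips m" "b \<in> chips m" "a < b"
    "conf_at mv t a = move_site mv t" "conf_at mv t b = move_site mv t"
    using legal_unpack[OF cr t] by blast
  define p where "p = move_site mv t"
  have "conf_at mv (Suc t) = (conf_at mv t)(a := p - 1, b := p + 1)"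
    using conf_at_Suc[OF t] ab by (simp add: fire_def p_def)
  then have "int (chips_at m (conf_at mv (Suc t)) s) = int (chips_at m (conf_at mv t) s)
     + (if s = p - 1 then 1 else 0) + (if s = p + 1 then 1 else 0) - (if s = p then 2 else 0)"
    unfolding chips_at_def using card_fire[OF finite_chips ab(2,3) _ ab(5,6)[folded p_def]] ab(4) by simp
  then show ?case using Suc t by (auto simp: chip_Suc p_def)
qed

lemma good_run:
  assumes cr: "complete_run m mv"
  shows "good m (move_site mv) (length mv)"
  unfolding good_def
proof (intro conjI allI impI)
  fix t assume t: "t < length mv"
  obtain a b where ab: "mv ! t = (a, b)" "a \<in> chips m" "b \<in> chips m" "a < b"
    "conf_at mv t a = move_site mv t" "conf_at mv t b = move_site mv t"
    using legal_unpack[OF cr t] by blast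
  have "{a, b} \<subseteq> {l \<in> chips m. conf_at mv t l = move_site mv t}" using ab by auto
  then have "card {a, b} \<le> chips_at m (conf_at mv t) (move_site mv t)"
    unfolding chips_at_def by (rule card_mono[rotated]) (simp add: finite_chips)
  then have "chips_at m (conf_at mv t) (move_site mv t) \<ge> 2" using ab(4) by simp
  then have "int (chips_at m (conf_at mv t) (move_site mv t)) \<ge> 2" by simp
  moreover have "int (chips_at m (conf_at mv t) (move_site mv t)) = chip m (move_site mv) t (move_site mv t)"
    using chips_link[OF cr, of t "move_site mv t"] t by simp
  ultimately show "chip m (move_site mv) t (move_site mv t) \<ge> 2" by simp
next
  fix s
  have inj: "inj_on (conf_at mv (length mv)) (chips m)" using cr by (simp add: complete_run_def)
  have "card {l \<in> chips m. conf_at mv (length mv) l = s} \<le> Suc 0"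
    using finite_chips inj by (subst card_le_Suc0_iff_eq) (auto simp: inj_on_def)
  then show "chip m (move_site mv) (length mv) s \<le> 1" using chips_link[OF cr, of "length mv" s]
    by (simp add: chips_at_def)
qed

lemma filter_upt_nth:
  "p < length (filter P [0..<n]) \<Longrightarrow> filter P [0..<n] ! p < n \<and> P (filter P [0..<n] ! p)
     \<and> length (filter P [0..<(filter P [0..<n] ! p)]) = p"
proof (induction n)
  case 0 then show ?case by simp
next
  case (Suc n)
  show ?case
  proof (cases "p < length (filter P [0..<n])")
    case True
    then show ?thesis using Suc.IH by (simp add: nth_append)
  next
    case False
    then have "P n" "p = length (filter P [0..<n])" using Suc.prems by (auto split: if_splits)
    then show ?thesis by (simp add: nth_append)
  qed
qed

lemma fmove_info:
  assumes "fmove mv x y = Some i"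
  shows "i < length mv \<and> move_site mv i = int x - int y \<and>
    Fc (move_site mv) (length mv) (int x - int y) - Fc (move_site mv) i (int x - int y) = int (min x y) + 1"
proof -
  define xs where "xs = fire_indices mv (int x - int y)"
  define k where "k = min x y"
  have k: "k < length xs" and i: "i = xs ! (length xs - 1 - k)"
    using assms by (simp_all add: fmove_def xs_def k_def Let_def split: if_splits)
  have p: "length xs - 1 - k < length xs" using k by simp
  note f = filter_upt_nth[OF p[unfolded xs_def fire_indices_def]]
  have "Fc (move_site mv) (length mv) (int x - int y) = int (length xs)"
    by (simp add: Fc_def xs_def fire_indices_def)
  moreover have "Fc (move_site mv) i (int x - int y) = int (length xs - 1 - k)"
    using f i by (simp add: Fc_def xs_def fire_indices_def)
  ultimately show ?thesis using f i k by (simp add: xs_def fire_indices_def k_def of_nat_diff)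
qed


theorem lemma2p6:
  fixes m x y i :: nat and mv :: "(int \<times> int) list"
  assumes "m \<ge> 1"
    and "complete_run m mv"
    and "x \<le> m - 1" and "y \<le> m - 1"
    and "fmove mv x y = Some i"
  shows "(\<forall>j. fmove mv (x + 1) y = Some j \<longrightarrow> j < i)
       \<and> (\<forall>j. fmove mv x (y + 1) = Some j \<longrightarrow> j < i)
       \<and> chips_at m (conf_at mv i) (move_site mv i) = 2"
proof -
  define \<sigma> where "\<sigma> = move_site mv"
  define n where "n = length mv"
  define s where "s = int x - int y"
  have g: "good m \<sigma> n" using good_run[OF assms(2)] by (simp add: \<sigma>_def n_def)
  have Rv_eq: "Rv m \<sigma> t q = Fc \<sigma> n q - Fc \<sigma> t q" for t q using odometer[OF g, of q] by (simp add: Rv_def)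
  have ii: "i < n" "\<sigma> i = s" "Fc \<sigma> n s - Fc \<sigma> i s = int (min x y) + 1"
    using fmove_info[OF assms(5)] by (simp_all add: \<sigma>_def n_def s_def)
  have before: "j < i" if "Fc \<sigma> n q - Fc \<sigma> j q > Fc \<sigma> n q - Fc \<sigma> i q" for j q
  proof (rule ccontr)
    assume "\<not> j < i"
    then have "Fc \<sigma> i q \<le> Fc \<sigma> j q" by (intro Fc_mono) simp
    then show False using that by simp
  qed
  have mm: "int (m - 1) = int m - 1" using assms(1) by simp
  have xm: "int x \<le> int m - 1" "int y \<le> int m - 1" using assms(3,4) mm by linarith+
  have Ri: "Rv m \<sigma> i s = int (min x y) + 1" using ii Rv_eq by simp
  have main: "Rv m \<sigma> i (s + 1) < int (min (x + 1) y) + 1 \<and> Rv m \<sigma> i (s - 1) < int (min x (y + 1)) + 1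
      \<and> chip m \<sigma> i s = 2"
  proof -
    consider "y < x" | "x = y" | "x < y" by linarith
    then show ?thesis
    proof cases
      case 1
      have c: "Rv m \<sigma> i (s - 1) = int y + 1 \<and> Rv m \<sigma> i (s + 1) = int y \<and> chip m \<sigma> i s = 2"
        using claim_right[OF g ii(1,2), of "int y"] 1 xm Ri by (simp add: s_def)
      then show ?thesis using 1 by simp
    next
      case 2
      have c: "Rv m \<sigma> i (-1) = int y \<and> Rv m \<sigma> i 1 = int y \<and> chip m \<sigma> i 0 = 2"
        using claim_zero[OF g ii(1), of "int y"] ii(2) 2 xm Ri by (simp add: s_def)
      then show ?thesis using 2 by (simp add: s_def)
    next
      case 3
      have g': "good m (rfl \<sigma>) n" by (rule good_rfl[OF g])
      have si: "rfl \<sigma> i = - s" using ii(2) by (simp add: rfl_def)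
      have c: "Rv m (rfl \<sigma>) i (- s - 1) = int x + 1 \<and> Rv m (rfl \<sigma>) i (- s + 1) = int x \<and> chip m (rfl \<sigma>) i (- s) = 2"
        using claim_right[OF g' ii(1) si, of "int x"] 3 xm Ri by (simp add: s_def Rv_rfl)
      have e1: "Rv m (rfl \<sigma>) i (- s - 1) = Rv m \<sigma> i (s + 1)" unfolding Rv_rfl by (rule arg_cong[where f="Rv m \<sigma> i"]) simp
      have e2: "Rv m (rfl \<sigma>) i (- s + 1) = Rv m \<sigma> i (s - 1)" by (simp add: Rv_rfl)
      have e3: "chip m (rfl \<sigma>) i (- s) = chip m \<sigma> i s" by (simp add: chip_rfl)
      show ?thesis using c e1 e2 e3 3 by simp
    qed
  qed
  show ?thesis
  proof (intro conjI allI impI)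
    fix j assume "fmove mv (x + 1) y = Some j"
    have e: "int (x + 1) - int y = s + 1" by (simp add: s_def)
    note jj = fmove_info[OF \<open>fmove mv (x + 1) y = Some j\<close>, unfolded e, folded \<sigma>_def n_def]
    have "Fc \<sigma> n (s + 1) - Fc \<sigma> j (s + 1) = int (min (x + 1) y) + 1"
      using jj by blast
    then show "j < i" using main Rv_eq[of i "s + 1"] before[of "s + 1" j] by simp
  next
    fix j assume "fmove mv x (y + 1) = Some j"
    have e: "int x - int (y + 1) = s - 1" by (simp add: s_def)
    note jj = fmove_info[OF \<open>fmove mv x (y + 1) = Some j\<close>, unfolded e, folded \<sigma>_def n_def]
    have "Fc \<sigma> n (s - 1) - Fc \<sigma> j (s - 1) = int (min x (y + 1)) + 1"
      using jj by blast
    then show "j < i" using main Rv_eq[of i "s - 1"] before[of "s - 1" j] by simp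
  next
    have "int (chips_at m (conf_at mv i) (move_site mv i)) = chip m \<sigma> i (\<sigma> i)"
      using chips_link[OF assms(2), of i "move_site mv i"] ii(1) by (simp add: \<sigma>_def n_def)
    then show "chips_at m (conf_at mv i) (move_site mv i) = 2" using main ii(2) by simp
  qed
qed

end
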